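(* Let $0<R<\infty$ and let $f(x)=\sum_{n=0}^\infty a_nx^n$ with $a_n>0$ for all $n$ be convergent on $(-R,R)$. Define $m(x)=f(R-x^2/R)/f(x^2/R)$ for $x\in(0,R)$. If the sequence $\{R(n+1)a_{n+1}/a_n-n\}_{n\ge0}$ is decreasing, then $$\frac{1}{m\big(\sqrt[4]{(R^2-x^2)(R^2-y^2)}\big)}\le\sqrt{m(x)m(y)}\le m(\sqrt{xy})$$ for all $x,y\in(0,R)$, with equality if and only if $x=y$. *)

theory Defs
  imports Complex_Main
begin

definition pseries :: "(nat \<Rightarrow> real) \<Rightarrow> real \<Rightarrow> real" where
  "pseries a x = (\<Sum>n. a n * x ^ n)"

definition mfun :: "(nat \<Rightarrow> real) \<Rightarrow> real \<Rightarrow> real \<Rightarrow> real" where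
  "mfun a R x = pseries a (R - x\<^sup>2 / R) / pseries a (x\<^sup>2 / R)"

end

theory Submission
  imports Defs
begin

lemma sum_rev_atMost: "(\<Sum>i\<le>(n::nat). g (n - i)) = (\<Sum>i\<le>n. (g i :: real))"
  by (rule sum.reindex_bij_witness[where i="\<lambda>i. n-i" and j="\<lambda>i. n-i"]) (simp_all add: atMost_iff)

lemma pow_cmp:
  fixes x y :: real
  assumes "0 < x" "x < y" "i \<le> j"
  shows "x^j * y^i \<le> x^i * y^j"
proof -
  have "x^j * y^i = x^i * y^i * x^(j-i)" using assms(3)
    by (metis le_add_diff_inverse mult.commute mult.left_commute power_add)
  also have "\<dots> \<le> x^i * y^i * y^(j-i)"
    using assms by (intro mult_left_mono power_mono) auto
  also have "\<dots> = x^i * y^j" using assms(3)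
    by (metis le_add_diff_inverse mult.assoc power_add)
  finally show ?thesis .
qed

lemma term_nonneg:
  fixes x y :: real
  assumes "0 < x" "x < y" and al: "\<And>n. \<alpha> n > 0"
    and rat: "\<And>i j. i \<le> j \<Longrightarrow> \<beta> j * \<alpha> i \<le> \<beta> i * \<alpha> j"
  shows "0 \<le> (\<beta> i * \<alpha> k - \<beta> k * \<alpha> i) * (x^i * y^k - x^k * y^i)"
proof (cases "i \<le> k")
  case True
  then show ?thesis using rat[OF True] pow_cmp[OF assms(1,2) True] by (intro mult_nonneg_nonneg) auto
next
  case False
  then have F: "k \<le> i" by auto
  then show ?thesis using rat[OF F] pow_cmp[OF assms(1,2) F] by (intro mult_nonpos_nonpos) auto
qed

lemma ratio_ineq:
  fixes x y :: real
  assumes "0 < x" "x < y" and al: "\<And>n. \<alpha> n > 0"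
    and rat: "\<And>i j. i \<le> j \<Longrightarrow> \<beta> j * \<alpha> i \<le> \<beta> i * \<alpha> j"
    and sax: "summable (\<lambda>n. \<alpha> n * x^n)" and say: "summable (\<lambda>n. \<alpha> n * y^n)"
    and sbx: "summable (\<lambda>n. norm (\<beta> n * x^n))" and sby: "summable (\<lambda>n. norm (\<beta> n * y^n))"
  shows "0 \<le> (\<Sum>n. \<beta> n * x^n) * (\<Sum>n. \<alpha> n * y^n) - (\<Sum>n. \<beta> n * y^n) * (\<Sum>n. \<alpha> n * x^n)"
    and "\<beta> 1 * \<alpha> 0 < \<beta> 0 * \<alpha> 1 \<Longrightarrow>
      0 < (\<Sum>n. \<beta> n * x^n) * (\<Sum>n. \<alpha> n * y^n) - (\<Sum>n. \<beta> n * y^n) * (\<Sum>n. \<alpha> n * x^n)"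
proof -
  have nax: "summable (\<lambda>n. norm (\<alpha> n * x^n))" using sax al assms(1)
    by (simp add: abs_mult less_imp_le)
  have nay: "summable (\<lambda>n. norm (\<alpha> n * y^n))" using say al assms(1,2)
    by (simp add: abs_mult less_imp_le)
  define e where "e k = (\<Sum>i\<le>k. (\<beta> i * x^i) * (\<alpha> (k-i) * y^(k-i))) - (\<Sum>i\<le>k. (\<beta> i * y^i) * (\<alpha> (k-i) * x^(k-i)))" for k
  note s1 = Cauchy_product_sums[OF sbx nay]
  note s2 = Cauchy_product_sums[OF sby nax]
  have es: "e sums ((\<Sum>n. \<beta> n * x^n) * (\<Sum>n. \<alpha> n * y^n) - (\<Sum>n. \<beta> n * y^n) * (\<Sum>n. \<alpha> n * x^n))"
    unfolding e_def by (rule sums_diff[OF s1 s2])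
  define T where "T k i = (\<beta> i * \<alpha> (k-i)) * (x^i * y^(k-i) - y^i * x^(k-i))" for k i
  have eT: "e k = (\<Sum>i\<le>k. T k i)" for k
    unfolding e_def T_def by (simp add: sum_subtractf[symmetric] algebra_simps)
  have e2: "2 * e k = (\<Sum>i\<le>k. (\<beta> i * \<alpha> (k-i) - \<beta> (k-i) * \<alpha> i) * (x^i * y^(k-i) - x^(k-i) * y^i))" for k
  proof -
    have "2 * e k = (\<Sum>i\<le>k. T k i) + (\<Sum>i\<le>k. T k (k-i))"
      using eT sum_rev_atMost[of "T k" k] by simp
    also have "\<dots> = (\<Sum>i\<le>k. T k i + T k (k-i))" by (simp add: sum.distrib)
    also have "\<dots> = (\<Sum>i\<le>k. (\<beta> i * \<alpha> (k-i) - \<beta> (k-i) * \<alpha> i) * (x^i * y^(k-i) - x^(k-i) * y^i))"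
      by (rule sum.cong) (auto simp: T_def algebra_simps)
    finally show ?thesis .
  qed
  have enn: "0 \<le> e k" for k
  proof -
    have "0 \<le> 2 * e k" unfolding e2
      by (intro sum_nonneg term_nonneg[OF assms(1,2) al rat]) auto
    then show ?thesis by simp
  qed
  show "0 \<le> (\<Sum>n. \<beta> n * x^n) * (\<Sum>n. \<alpha> n * y^n) - (\<Sum>n. \<beta> n * y^n) * (\<Sum>n. \<alpha> n * x^n)"
    using sums_unique[OF es] enn sums_summable[OF es] by (metis suminf_nonneg)
  assume st: "\<beta> 1 * \<alpha> 0 < \<beta> 0 * \<alpha> 1"
  have "2 * e 1 = (\<beta> 0 * \<alpha> 1 - \<beta> 1 * \<alpha> 0) * (y - x) + (\<beta> 1 * \<alpha> 0 - \<beta> 0 * \<alpha> 1) * (x - y)"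
    unfolding e2 by (simp add: atMost_Suc)
  also have "\<dots> = 2 * ((\<beta> 0 * \<alpha> 1 - \<beta> 1 * \<alpha> 0) * (y - x))" by (simp add: algebra_simps)
  also have "\<dots> > 0" using st assms(2) by (intro mult_pos_pos) auto
  finally have "0 < e 1" by simp
  then show "0 < (\<Sum>n. \<beta> n * x^n) * (\<Sum>n. \<alpha> n * y^n) - (\<Sum>n. \<beta> n * y^n) * (\<Sum>n. \<alpha> n * x^n)"
    using sums_unique[OF es] enn sums_summable[OF es] suminf_pos2 by metis
qed


context
  fixes a :: "nat \<Rightarrow> real" and R :: real
  assumes R_pos: "0 < R"
    and a_pos: "\<And>n. a n > 0"
    and conv: "\<And>x. \<bar>x\<bar> < R \<Longrightarrow> summable (\<lambda>n. a n * x ^ n)"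
    and dec: "decseq (\<lambda>n. R * real (n + 1) * a (n + 1) / a n - real n)"
begin

lemma fderiv: "\<bar>z\<bar> < R \<Longrightarrow> (pseries a has_real_derivative pseries (diffs a) z) (at z)"
  unfolding pseries_def[abs_def] using termdiffs_strong'[of R a z] conv
  by (metis pseries_def real_norm_def)

lemma fpos: "0 < z \<Longrightarrow> z < R \<Longrightarrow> 0 < pseries a z"
  unfolding pseries_def using conv[of z] a_pos by (intro suminf_pos) auto

lemma sdiffs: "\<bar>z\<bar> < R \<Longrightarrow> summable (\<lambda>n. diffs a n * z^n)"
  using termdiff_converges[of z R a] conv by auto

lemma Nsums: "\<bar>z\<bar> < R \<Longrightarrow> (\<lambda>n. real n * a n * z^n) sums (z * pseries (diffs a) z)"
proof -
  assume z: "\<bar>z\<bar> < R"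
  have "(\<lambda>n. z * (diffs a n * z^n)) sums (z * pseries (diffs a) z)"
    unfolding pseries_def using sdiffs[OF z] by (intro sums_mult summable_sums)
  moreover have "(\<lambda>n. z * (diffs a n * z^n)) = (\<lambda>n. real (Suc n) * a (Suc n) * z^(Suc n))"
    by (auto simp: diffs_def fun_eq_iff)
  ultimately show ?thesis using sums_Suc_iff[of "\<lambda>n. real n * a n * z^n"] by simp
qed

definition Q1 where "Q1 x = (R - x) * pseries (diffs a) x / pseries a x"
definition Q2 where "Q2 x = x * pseries (diffs a) x / pseries a x"

lemma Q2_mono:
  assumes "0 < x" "x < y" "y < R"
  shows "Q2 x < Q2 y"
proof -
  have xR: "\<bar>x\<bar> < R" and yR: "\<bar>y\<bar> < R" using assms by auto
  have nx: "summable (\<lambda>n. norm (- (real n * a n) * x^n))"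
    using sums_summable[OF Nsums[OF xR]] assms a_pos by (simp add: abs_mult less_imp_le)
  have ny: "summable (\<lambda>n. norm (- (real n * a n) * y^n))"
    using sums_summable[OF Nsums[OF yR]] assms a_pos by (simp add: abs_mult less_imp_le)
  have rat: "- (real j * a j) * a i \<le> - (real i * a i) * a j" if "i \<le> j" for i j
    using that a_pos[of i] a_pos[of j] by (simp add: mult_right_mono)
  have "0 < (\<Sum>n. - (real n * a n) * x^n) * (\<Sum>n. a n * y^n) - (\<Sum>n. - (real n * a n) * y^n) * (\<Sum>n. a n * x^n)"
    using a_pos[of 0] a_pos[of 1]
    by (intro ratio_ineq(2)[OF assms(1,2) a_pos rat conv[OF xR] conv[OF yR] nx ny]) auto
  moreover have "(\<Sum>n. - (real n * a n) * x^n) = - (x * pseries (diffs a) x)"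
    using sums_unique[OF sums_minus[OF Nsums[OF xR]]] by simp
  moreover have "(\<Sum>n. - (real n * a n) * y^n) = - (y * pseries (diffs a) y)"
    using sums_unique[OF sums_minus[OF Nsums[OF yR]]] by simp
  ultimately have "x * pseries (diffs a) x * pseries a y < y * pseries (diffs a) y * pseries a x"
    unfolding pseries_def by simp
  then show ?thesis unfolding Q2_def using fpos[of x] fpos[of y] assms
    by (simp add: divide_simps mult_ac)
qed

lemma Q1_mono:
  assumes "0 < x" "x < y" "y < R"
  shows "Q1 y \<le> Q1 x"
proof -
  have xR: "\<bar>x\<bar> < R" and yR: "\<bar>y\<bar> < R" using assms by auto
  define \<beta> where "\<beta> n = R * diffs a n - real n * a n" for n
  have bs: "(\<lambda>n. \<beta> n * z^n) sums (R * pseries (diffs a) z - z * pseries (diffs a) z)"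
     if "\<bar>z\<bar> < R" for z
  proof -
    have "(\<lambda>n. R * (diffs a n * z^n) - real n * a n * z^n) sums (R * pseries (diffs a) z - z * pseries (diffs a) z)"
      unfolding pseries_def using sdiffs[OF that] Nsums[OF that]
      by (intro sums_diff sums_mult summable_sums)
         (auto simp: pseries_def)
    then show ?thesis by (simp add: \<beta>_def algebra_simps)
  qed
  have nb: "summable (\<lambda>n. norm (\<beta> n * z^n))" if "0 < z" "z < R" for z
  proof (rule summable_comparison_test)
    have zR: "\<bar>z\<bar> < R" using that by auto
    show "summable (\<lambda>n. R * (diffs a n * z^n) + real n * a n * z^n)"
      using sdiffs[OF zR] sums_summable[OF Nsums[OF zR]] by (intro summable_add summable_mult)
    have "norm (\<beta> n * z^n) \<le> R * (diffs a n * z^n) + real n * a n * z^n" for n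
    proof -
      have "norm (\<beta> n * z^n) = \<bar>R * (diffs a n * z^n) - real n * a n * z^n\<bar>"
        by (simp add: \<beta>_def algebra_simps)
      also have "\<dots> \<le> \<bar>R * (diffs a n * z^n)\<bar> + \<bar>real n * a n * z^n\<bar>" by (rule abs_triangle_ineq4)
      also have "\<dots> = R * (diffs a n * z^n) + real n * a n * z^n"
        using that R_pos a_pos[of n] a_pos[of "Suc n"]
        by (simp add: diffs_def abs_mult less_imp_le)
      finally show ?thesis .
    qed
    then show "\<exists>N. \<forall>n\<ge>N. norm (norm (\<beta> n * z^n)) \<le> R * (diffs a n * z^n) + real n * a n * z^n"
      by auto
  qed
  have rat: "\<beta> j * a i \<le> \<beta> i * a j" if "i \<le> j" for i j
  proof -
    have "R * real (j + 1) * a (j + 1) / a j - real j \<le> R * real (i + 1) * a (i + 1) / a i - real i"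
      using dec that unfolding decseq_def by blast
    moreover have "R * real (n + 1) * a (n + 1) / a n - real n = \<beta> n / a n" for n
      using a_pos[of n] by (simp add: \<beta>_def diffs_def field_simps)
    ultimately have "\<beta> j / a j \<le> \<beta> i / a i" by simp
    then show ?thesis using a_pos[of i] a_pos[of j] by (simp add: divide_simps mult_ac)
  qed
  have "0 \<le> (\<Sum>n. \<beta> n * x^n) * (\<Sum>n. a n * y^n) - (\<Sum>n. \<beta> n * y^n) * (\<Sum>n. a n * x^n)"
    by (rule ratio_ineq(1)[OF assms(1,2) a_pos rat conv[OF xR] conv[OF yR] nb nb]) (use assms in auto)
  then have "(R - y) * pseries (diffs a) y * pseries a x \<le> (R - x) * pseries (diffs a) x * pseries a y"
    using sums_unique[OF bs[OF xR]] sums_unique[OF bs[OF yR]]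
    unfolding pseries_def by (simp add: algebra_simps)
  then show ?thesis unfolding Q1_def using fpos[of x] fpos[of y] assms
    by (simp add: divide_simps mult_ac)
qed


definition K where "K t = ln (pseries a (R - t)) - ln (pseries a t)"
definition G' where "G' u = - (Q1 (R - exp u) + Q2 (exp u))"

lemma Gderiv:
  assumes "u < ln R"
  shows "((\<lambda>u. K (exp u)) has_real_derivative G' u) (at u)"
proof -
  have e1: "0 < exp u" by simp
  have e2: "exp u < R" using exp_less_mono[OF assms] R_pos by simp
  have D1: "(pseries a has_real_derivative pseries (diffs a) (R - exp u)) (at (R - exp u))"
    using e1 e2 by (intro fderiv) auto
  have D2: "(pseries a has_real_derivative pseries (diffs a) (exp u)) (at (exp u))"
    using e1 e2 by (intro fderiv) auto
  have p1: "0 < pseries a (R - exp u)" using e1 e2 by (intro fpos) auto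
  have p2: "0 < pseries a (exp u)" using e1 e2 by (intro fpos) auto
  have Dm: "((\<lambda>u. R - exp u) has_real_derivative - exp u) (at u)"
    by (auto intro!: derivative_eq_intros)
  have A1: "((\<lambda>u. pseries a (R - exp u)) has_real_derivative pseries (diffs a) (R - exp u) * (- exp u)) (at u)"
    by (rule DERIV_chain2[OF D1 Dm])
  have A2: "((\<lambda>u. pseries a (exp u)) has_real_derivative pseries (diffs a) (exp u) * exp u) (at u)"
    by (rule DERIV_chain2[OF D2 DERIV_exp])
  have B1: "((\<lambda>u. ln (pseries a (R - exp u))) has_real_derivative 1 / pseries a (R - exp u) * (pseries (diffs a) (R - exp u) * (- exp u))) (at u)"
    by (rule DERIV_chain2[OF DERIV_ln_divide[OF p1] A1])
  have B2: "((\<lambda>u. ln (pseries a (exp u))) has_real_derivative 1 / pseries a (exp u) * (pseries (diffs a) (exp u) * exp u)) (at u)"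
    by (rule DERIV_chain2[OF DERIV_ln_divide[OF p2] A2])
  have "((\<lambda>u. K (exp u)) has_real_derivative 1 / pseries a (R - exp u) * (pseries (diffs a) (R - exp u) * (- exp u)) - 1 / pseries a (exp u) * (pseries (diffs a) (exp u) * exp u)) (at u)"
    unfolding K_def by (rule DERIV_diff[OF B1 B2])
  then show ?thesis unfolding G'_def Q1_def Q2_def
    by (rule DERIV_cong) (simp add: field_simps)
qed

lemma G'_mono:
  assumes "u < v" "v < ln R"
  shows "G' v < G' u"
proof -
  have e: "exp u < exp v" "exp v < R" using assms R_pos exp_less_mono by auto (metis exp_ln exp_less_mono)
  have "Q1 (R - exp u) \<le> Q1 (R - exp v)" using e by (intro Q1_mono) auto
  moreover have "Q2 (exp u) < Q2 (exp v)" using e by (intro Q2_mono) auto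
  ultimately show ?thesis unfolding G'_def by simp
qed

lemma G_mid:
  assumes "u < v" "v < ln R"
  shows "K (exp u) + K (exp v) < 2 * K (exp ((u + v) / 2))"
proof -
  define m where "m = (u + v) / 2"
  have m: "u < m" "m < v" using assms unfolding m_def by auto
  obtain z1 where z1: "u < z1" "z1 < m" "K (exp m) - K (exp u) = (m - u) * G' z1"
    using MVT2[OF m(1), of "\<lambda>u. K (exp u)" G'] Gderiv m assms by force
  obtain z2 where z2: "m < z2" "z2 < v" "K (exp v) - K (exp m) = (v - m) * G' z2"
    using MVT2[OF m(2), of "\<lambda>u. K (exp u)" G'] Gderiv m assms by force
  have "G' z2 < G' z1" using z1 z2 assms by (intro G'_mono) auto
  moreover have "v - m = m - u" "0 < m - u" using m by (auto simp: m_def field_simps)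
  ultimately have "(v - m) * G' z2 < (m - u) * G' z1" by simp
  then show ?thesis using z1 z2 unfolding m_def by simp
qed

lemma K_mid:
  assumes "0 < t" "t < R" "0 < s" "s < R" "t \<noteq> s"
  shows "K t + K s < 2 * K (sqrt (t * s))"
proof -
  have gen: "K t + K s < 2 * K (sqrt (t * s))" if "0 < t" "t < s" "s < R" for t s
  proof -
    have "ln t < ln s" "ln s < ln R" using that by auto
    from G_mid[OF this] have "K t + K s < 2 * K (exp ((ln t + ln s) / 2))" using that by simp
    moreover have "exp ((ln t + ln s) / 2) = sqrt (t * s)"
    proof -
      have "sqrt (t * s) = exp (ln (sqrt (t * s)))" using that by simp
      also have "ln (sqrt (t * s)) = ln (t * s) / 2" using that by (simp add: ln_sqrt)
      also have "ln (t * s) = ln t + ln s" using that by (simp add: ln_mult)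
      finally show ?thesis by simp
    qed
    ultimately show ?thesis by simp
  qed
  show ?thesis
  proof (cases "t < s")
    case True then show ?thesis using gen assms by auto
  next
    case False then show ?thesis using gen[of s t] assms by (auto simp: mult.commute add.commute)
  qed
qed

lemma mK: "0 < t \<Longrightarrow> t < R \<Longrightarrow> pseries a (R - t) / pseries a t = exp (K t)"
  using fpos[of t] fpos[of "R - t"] by (simp add: K_def exp_diff)

lemma KR: "K (R - t) = - K t"
  by (simp add: K_def)

lemma tpos: "0 < x \<Longrightarrow> x < R \<Longrightarrow> 0 < x\<^sup>2 / R \<and> x\<^sup>2 / R < R"
  using R_pos by (auto simp: field_simps power2_eq_square intro: mult_strict_mono)

lemma core:
  assumes "0 < t" "t < R" "0 < s" "s < R"
  shows "K t + K s \<le> 2 * K (sqrt (t * s)) \<and> (K t + K s = 2 * K (sqrt (t * s)) \<longleftrightarrow> t = s)"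
proof (cases "t = s")
  case True
  then show ?thesis using assms by simp
next
  case False
  then show ?thesis using K_mid[OF assms False] by simp
qed

lemma sqrt_exp2: "sqrt (exp A * exp B) = exp ((A + B) / 2)"
proof -
  have "exp A * exp B = (exp ((A + B) / 2))\<^sup>2"
    by (simp add: power2_eq_square exp_add[symmetric])
  then show ?thesis by simp
qed

lemma main:
  assumes x: "0 < x" "x < R" and y: "0 < y" "y < R"
  shows "1 / mfun a R (root 4 ((R\<^sup>2 - x\<^sup>2) * (R\<^sup>2 - y\<^sup>2))) \<le> sqrt (mfun a R x * mfun a R y)
    \<and> sqrt (mfun a R x * mfun a R y) \<le> mfun a R (sqrt (x * y))
    \<and> (1 / mfun a R (root 4 ((R\<^sup>2 - x\<^sup>2) * (R\<^sup>2 - y\<^sup>2))) = sqrt (mfun a R x * mfun a R y) \<longleftrightarrow> x = y)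
    \<and> (sqrt (mfun a R x * mfun a R y) = mfun a R (sqrt (x * y)) \<longleftrightarrow> x = y)"
proof -
  define t where "t = x\<^sup>2 / R"
  define s where "s = y\<^sup>2 / R"
  have t: "0 < t" "t < R" using tpos[OF x] unfolding t_def by auto
  have s: "0 < s" "s < R" using tpos[OF y] unfolding s_def by auto
  have mx: "mfun a R x = exp (K t)" using mK[OF t] unfolding mfun_def t_def by simp
  have my: "mfun a R y = exp (K s)" using mK[OF s] unfolding mfun_def s_def by simp
  have sq: "sqrt (mfun a R x * mfun a R y) = exp ((K t + K s) / 2)"
    unfolding mx my by (rule sqrt_exp2)
  have ts: "sqrt (t * s) = x * y / R"
  proof -
    have "t * s = (x * y / R)\<^sup>2" unfolding t_def s_def by (simp add: power2_eq_square field_simps)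
    then show ?thesis using x y R_pos by simp
  qed
  have st1: "0 < sqrt (t * s)" using t s by simp
  have st2: "sqrt (t * s) < R"
  proof -
    have "t * s < R * R" using t s by (intro mult_strict_mono) auto
    then have "sqrt (t * s) < sqrt (R * R)" by (rule real_sqrt_less_mono)
    then show ?thesis using R_pos by simp
  qed
  have mxy: "mfun a R (sqrt (x * y)) = exp (K (sqrt (t * s)))"
  proof -
    have "(sqrt (x * y))\<^sup>2 / R = sqrt (t * s)" using x y ts by simp
    then show ?thesis unfolding mfun_def by (simp only:) (rule mK[OF st1 st2])
  qed
  define P where "P = (R\<^sup>2 - x\<^sup>2) * (R\<^sup>2 - y\<^sup>2)"
  define w where "w = sqrt ((R - t) * (R - s))"
  have P: "P = R\<^sup>2 * ((R - t) * (R - s))" unfolding P_def t_def s_def using R_pos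
    by (simp add: field_simps power2_eq_square)
  have Pnn: "0 \<le> P" unfolding P using t s by simp
  have z2: "(root 4 P)\<^sup>2 / R = w"
  proof -
    have "root 4 P = sqrt (sqrt P)" using real_root_mult_exp[of 2 2 P] by (simp add: sqrt_def)
    then have "(root 4 P)\<^sup>2 = sqrt P" using Pnn by simp
    also have "sqrt P = R * w" unfolding P w_def using R_pos by (simp add: real_sqrt_mult)
    finally show ?thesis using R_pos by simp
  qed
  have w1: "0 < w" unfolding w_def using t s by simp
  have w2: "w < R"
  proof -
    have "(R - t) * (R - s) < R * R" using t s by (intro mult_strict_mono) auto
    then have "sqrt ((R - t) * (R - s)) < sqrt (R * R)" by (rule real_sqrt_less_mono)
    then show ?thesis unfolding w_def using R_pos by simp
  qed
  have mz: "1 / mfun a R (root 4 P) = exp (- K w)"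
  proof -
    have "mfun a R (root 4 P) = exp (K w)" unfolding mfun_def z2 by (rule mK[OF w1 w2])
    then show ?thesis by (simp add: exp_minus divide_inverse)
  qed
  note c1 = core[OF t s]
  note c2 = core[of "R - t" "R - s"]
  have xy: "t = s \<longleftrightarrow> x = y"
  proof
    assume "t = s"
    then have "x\<^sup>2 = y\<^sup>2" unfolding t_def s_def using R_pos by simp
    then show "x = y" using x y by (simp add: power2_eq_iff)
  qed (simp add: t_def s_def)
  have c2': "K (R - t) + K (R - s) \<le> 2 * K w \<and> (K (R - t) + K (R - s) = 2 * K w \<longleftrightarrow> R - t = R - s)"
    unfolding w_def by (rule core) (use t s in auto)
  have L: "- K w \<le> (K t + K s) / 2 \<and> (- K w = (K t + K s) / 2 \<longleftrightarrow> x = y)"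
  proof -
    have e1: "(- K w = (K t + K s) / 2) \<longleftrightarrow> (K (R - t) + K (R - s) = 2 * K w)" unfolding KR by (auto simp: field_simps)
    have e2: "(R - t = R - s) \<longleftrightarrow> x = y" using xy by linarith
    have "- K w \<le> (K t + K s) / 2" using conjunct1[OF c2'] unfolding KR by (simp add: field_simps)
    then show ?thesis using c2' e1 e2 unfolding KR by blast
  qed
  have Rt: "(K t + K s) / 2 \<le> K (sqrt (t * s)) \<and> ((K t + K s) / 2 = K (sqrt (t * s)) \<longleftrightarrow> x = y)"
  proof -
    have "(K t + K s) / 2 \<le> K (sqrt (t * s))" using conjunct1[OF c1] by (auto simp: field_simps)
    moreover have "((K t + K s) / 2 = K (sqrt (t * s))) \<longleftrightarrow> (K t + K s = 2 * K (sqrt (t * s)))" by (auto simp: field_simps)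
    ultimately show ?thesis using c1 xy by blast
  qed
  show ?thesis unfolding P_def[symmetric] mz sq mxy using L Rt by (simp only: exp_le_cancel_iff exp_inj_iff)
qed

end

theorem theorem1p5:
  fixes a :: "nat \<Rightarrow> real" and R :: real
  assumes R_pos: "0 < R"
    and a_pos: "\<And>n. a n > 0"
    and conv: "\<And>x. \<bar>x\<bar> < R \<Longrightarrow> summable (\<lambda>n. a n * x ^ n)"
    and dec: "decseq (\<lambda>n. R * real (n + 1) * a (n + 1) / a n - real n)"
  shows "\<forall>x y. 0 < x \<and> x < R \<and> 0 < y \<and> y < R \<longrightarrow>
      1 / mfun a R (root 4 ((R\<^sup>2 - x\<^sup>2) * (R\<^sup>2 - y\<^sup>2))) \<le> sqrt (mfun a R x * mfun a R y)
    \<and> sqrt (mfun a R x * mfun a R y) \<le> mfun a R (sqrt (x * y))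
    \<and> (1 / mfun a R (root 4 ((R\<^sup>2 - x\<^sup>2) * (R\<^sup>2 - y\<^sup>2))) = sqrt (mfun a R x * mfun a R y) \<longleftrightarrow> x = y)
    \<and> (sqrt (mfun a R x * mfun a R y) = mfun a R (sqrt (x * y)) \<longleftrightarrow> x = y)"
  using main[OF R_pos a_pos conv dec] by blast

end
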